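(* Let $n_0$ be a positive integer and let $X$ be a semiprime complex Banach algebra with identity. Let $\phi,\psi:X^2\to[0,\infty)$ and $f:X\to X$ with $f(0)=0$ satisfy $$\|f(xyx)-f(x)yx-xf(y)x-xyf(x)\|\le\psi(x,y),$$ $$\|f(2\mu x+\mu y)+f(\mu x+2\mu y)-\mu[f(3x)+f(3y)]\|\le\phi(x,y)$$ for all $x,y\in X$ and all $\mu\in\mathbb{T}^1_{n_0}$. Assume there exists $0<L<1$ such that for all $x,y\in X$ $$\tfrac12\phi(2x,2y)\le L\phi(x,y),\qquad \lim_{k\to\infty}8^{-k}\psi(2^kx,2^ky)=0,\qquad \lim_{k\to\infty}4^{-k}\psi(2^kx,y)=0.$$ Then $f$ is a linear derivation.
   Context: $\mathbb{T}^1_{n_0}:=\{e^{i\theta}: 0\le\theta\le 2\pi/n_0\}$. An algebra $X$ is semiprime if $aXa=\{0\}$ for some $a\in X$ implies $a=0$. A linear derivation is a $\mathbb{C}$-linear map $D:X\to X$ with $D(xy)=D(x)y+xD(y)$ for all $x,y\in X$. *)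

theory Defs
  imports "HOL-Analysis.Analysis"
begin

class scaleC =
  fixes scaleC :: "complex \<Rightarrow> 'a \<Rightarrow> 'a" (infixr \<open>*\<^sub>C\<close> 75)

class complex_banach_algebra_1 = real_normed_algebra_1 + banach + scaleC +
  assumes scaleC_add_right: "c *\<^sub>C (x + y) = c *\<^sub>C x + c *\<^sub>C y"
    and scaleC_add_left: "(a + b) *\<^sub>C x = a *\<^sub>C x + b *\<^sub>C x"
    and scaleC_scaleC: "a *\<^sub>C (b *\<^sub>C x) = (a * b) *\<^sub>C x"
    and scaleC_one: "1 *\<^sub>C x = x"
    and scaleC_of_real: "(complex_of_real r) *\<^sub>C x = r *\<^sub>R x"
    and norm_scaleC: "norm (c *\<^sub>C x) = cmod c * norm x"
    and scaleC_left_mult: "(c *\<^sub>C x) * y = c *\<^sub>C (x * y)"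
    and scaleC_right_mult: "x * (c *\<^sub>C y) = c *\<^sub>C (x * y)"

definition arcT :: "nat \<Rightarrow> complex set" where
  "arcT n0 = {cis \<theta> | \<theta>. 0 \<le> \<theta> \<and> \<theta> \<le> 2 * pi / real n0}"

definition semiprime :: "'a::ring itself \<Rightarrow> bool" where
  "semiprime _ \<longleftrightarrow> (\<forall>a::'a. (\<forall>x::'a. a * x * a = 0) \<longrightarrow> a = 0)"

definition linear_derivation :: "('a::complex_banach_algebra_1 \<Rightarrow> 'a) \<Rightarrow> bool" where
  "linear_derivation D \<longleftrightarrow>
     (\<forall>x y. D (x + y) = D x + D y) \<and> (\<forall>c x. D (c *\<^sub>C x) = c *\<^sub>C D x) \<and>
     (\<forall>x y. D (x * y) = D x * y + x * D y)"

end

theory Submission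
  imports Defs "HOL-Analysis.Analysis"
begin


locale jtd =
  fixes D :: "'a::ring_1 \<Rightarrow> 'a"
  assumes Dadd: "\<And>x y. D (x + y) = D x + D y"
    and sp: "\<And>a::'a. (\<And>x. a * x * a = 0) \<Longrightarrow> a = 0"
    and tf: "\<And>x::'a. x + x = 0 \<Longrightarrow> x = 0"
    and tri: "\<And>x y. D (x * y * x) = D x * y * x + x * D y * x + x * y * D x"
begin

lemma D0: "D 0 = 0" using Dadd[of 0 0] by simp
lemma Dneg: "D (- x) = - D x" using Dadd[of x "-x"] D0 by (simp add: add_eq_0_iff2)
lemma Ddiff: "D (x - y) = D x - D y" using Dadd[of x "-y"] Dneg by simp
lemma D1: "D 1 = 0"
proof -
  have "D 1 = D 1 + D 1 + D 1" using tri[of 1 1] by simp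
  then have "D 1 + (D 1 + D 1) = D 1 + 0" by (simp add: add.assoc)
  then have "D 1 + D 1 = 0" by (rule add_left_imp_eq)
  then show ?thesis by (rule tf)
qed

lemma L2: "D (x*y*z + z*y*x) = D x*y*z + x*D y*z + x*y*D z + D z*y*x + z*D y*x + z*y*D x"
proof -
  have "(x+z)*y*(x+z) = x*y*x + (x*y*z + z*y*x) + z*y*z" by (simp add: algebra_simps)
  then have "D (x*y*z + z*y*x) = D ((x+z)*y*(x+z)) - D (x*y*x) - D (z*y*z)" by (simp add: Dadd)
  also have "\<dots> = D x*y*z + x*D y*z + x*y*D z + D z*y*x + z*D y*x + z*y*D x"
    unfolding tri by (simp add: Dadd algebra_simps)
  finally show ?thesis .
qed

lemma jordan: "D (x*z + z*x) = D x*z + x*D z + D z*x + z*D x"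
  using L2[of x 1 z] D1 by simp

definition G where "G x y = D (x*y) - D x * y - x * D y"

lemma Gskew: "G y x = - G x y"
  using jordan[of x y] unfolding G_def by (simp add: Dadd algebra_simps)

lemma Gadd1: "G (x+u) y = G x y + G u y" unfolding G_def by (simp add: Dadd algebra_simps)
lemma Gadd2: "G x (y+v) = G x y + G x v" unfolding G_def by (simp add: Dadd algebra_simps)

lemma L4: "G x y * w * (x*y - y*x) + (x*y - y*x) * w * G x y = 0"
proof -
  have e1: "D (x*y*w*(y*x) + y*x*w*(x*y)) = D(x*y)*w*(y*x) + x*y*D w*(y*x) + x*y*w*D(y*x) + D(y*x)*w*(x*y) + y*x*D w*(x*y) + y*x*w*D(x*y)"
    by (rule L2)
  have e2: "x*y*w*(y*x) + y*x*w*(x*y) = x*(y*w*y)*x + y*(x*w*x)*y" by (simp add: mult.assoc)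
  have e3: "D (x*(y*w*y)*x + y*(x*w*x)*y) = D x*(y*w*y)*x + x*(D y*w*y + y*D w*y + y*w*D y)*x + x*(y*w*y)*D x
     + (D y*(x*w*x)*y + y*(D x*w*x + x*D w*x + x*w*D x)*y + y*(x*w*x)*D y)"
    by (simp add: Dadd tri)
  have dxy: "D (x*y) = G x y + D x * y + x * D y" unfolding G_def by simp
  have dyx: "D (y*x) = - G x y + D y * x + y * D x" using Gskew[of x y] unfolding G_def by (simp add: algebra_simps)
  from e1 e2 e3 have "D(x*y)*w*(y*x) + x*y*D w*(y*x) + x*y*w*D(y*x) + D(y*x)*w*(x*y) + y*x*D w*(x*y) + y*x*w*D(x*y)
    = D x*(y*w*y)*x + x*(D y*w*y + y*D w*y + y*w*D y)*x + x*(y*w*y)*D x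
     + (D y*(x*w*x)*y + y*(D x*w*x + x*D w*x + x*w*D x)*y + y*(x*w*x)*D y)" by simp
  then show ?thesis unfolding dxy dyx by (simp add: algebra_simps)
qed

lemma bresar:
  fixes a b :: 'a
  assumes H: "\<And>w. a * w * b + b * w * a = 0"
  shows "a * x * b = 0"
proof (rule sp)
  fix y
  have Hn: "\<And>w. b * w * a = - (a * w * b)" using H by (simp add: eq_neg_iff_add_eq_0 add.commute)
  have "a*x*b*y*(a*x*b) = a*x*(b*y*a)*x*b" by (simp add: mult.assoc)
  also have "\<dots> = - ((a*(x*a*y)*b)*x*b)" by (simp only: Hn[of y]) (simp add: mult.assoc)
  also have "\<dots> = (b*(x*a*y)*a)*x*b" by (simp add: Hn)
  also have "\<dots> = (b*x*a)*y*(a*x*b)" by (simp add: mult.assoc)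
  also have "\<dots> = - (a*x*b*y*(a*x*b))" by (simp add: Hn)
  finally have "a*x*b*y*(a*x*b) + a*x*b*y*(a*x*b) = 0" by (simp add: eq_neg_iff_add_eq_0)
  then show "a*x*b*y*(a*x*b) = 0" by (rule tf)
qed

lemma K1: "G x y * w * (x*y - y*x) = 0"
  using L4 by (intro bresar) 

lemma K2: "G x y * w * (u*y - y*u) = 0"
proof (rule sp)
  fix r
  have a: "(G x y + G u y) * w * ((x+u)*y - y*(x+u)) = 0" using K1[of "x+u" y w] by (simp add: Gadd1)
  have "G x y * w * (u*y - y*u) + G u y * w * (x*y - y*x) = 0"
    using a K1[of x y w] K1[of u y w] by (simp add: algebra_simps)
  then have b: "G x y * w * (u*y - y*u) = - (G u y * w * (x*y - y*x))" by (simp add: eq_neg_iff_add_eq_0)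
  have "G x y * w * (u*y - y*u) * r * (G x y * w * (u*y - y*u)) = G x y * w * (u*y - y*u) * r * (- (G u y * w * (x*y - y*x)))"
    using b by simp
  also have "\<dots> = - (G x y * (w * (u*y - y*u) * r * G u y * w) * (x*y - y*x))"
    by (simp add: mult.assoc)
  also have "\<dots> = 0" by (simp add: K1)
  finally show "G x y * w * (u*y - y*u) * r * (G x y * w * (u*y - y*u)) = 0" .
qed

lemma K3: "G x y * w * (u*t - t*u) = 0"
proof (rule sp)
  fix r
  have a: "(G x y + G x t) * w * (u*(y+t) - (y+t)*u) = 0" using K2[of x "y+t" w u] by (simp add: Gadd2)
  have "G x y * w * (u*t - t*u) + G x t * w * (u*y - y*u) = 0"
    using a K2[of x y w u] K2[of x t w u] by (simp add: algebra_simps)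
  then have b: "G x y * w * (u*t - t*u) = - (G x t * w * (u*y - y*u))" by (simp add: eq_neg_iff_add_eq_0)
  have "G x y * w * (u*t - t*u) * r * (G x y * w * (u*t - t*u)) = G x y * w * (u*t - t*u) * r * (- (G x t * w * (u*y - y*u)))"
    using b by simp
  also have "\<dots> = - (G x y * (w * (u*t - t*u) * r * G x t * w) * (u*y - y*u))"
    by (simp add: mult.assoc)
  also have "\<dots> = 0" by (simp add: K2)
  finally show "G x y * w * (u*t - t*u) * r * (G x y * w * (u*t - t*u)) = 0" .
qed

lemma Gcentral: "G x y * r = r * G x y"
proof -
  let ?a = "G x y"
  have "(?a*r - r*?a) * w * (?a*r - r*?a) = 0" for w
  proof -
    have "(?a*r - r*?a) * w * (?a*r - r*?a) = ?a * (r*w) * (?a*r - r*?a) - r * (?a * w * (?a*r - r*?a))"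
      by (simp add: algebra_simps)
    also have "\<dots> = 0" using K3[of x y "r*w" ?a r] K3[of x y w ?a r] by simp
    finally show ?thesis .
  qed
  then have "?a*r - r*?a = 0" by (rule sp)
  then show ?thesis by simp
qed

lemma G0: "G x y = 0"
proof -
  let ?a = "G x y" and ?c = "x*y - y*x"
  have ac: "?a * (p*q - q*p) = 0" for p q using K3[of x y 1 p q] by simp
  have two: "?a + ?a = D ?c - (D x * y - y * D x) - (x * D y - D y * x)"
  proof -
    have "?a + ?a = G x y - G y x" using Gskew[of x y] by simp
    also have "\<dots> = D ?c - (D x * y - y * D x) - (x * D y - D y * x)"
      unfolding G_def by (simp add: Ddiff algebra_simps)
    finally show ?thesis .
  qed
  have "D (?a * ?c + ?c * ?a) = D ?a * ?c + ?a * D ?c + D ?c * ?a + ?c * D ?a" by (rule jordan)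
  moreover have "?a * ?c + ?c * ?a = 0" using ac[of x y] Gcentral[of x y ?c] by simp
  ultimately have j: "0 = D ?a * ?c + ?a * D ?c + D ?c * ?a + ?c * D ?a" by (simp add: D0)
  have "?a * (D ?a * ?c + ?a * D ?c + D ?c * ?a + ?c * D ?a) = D ?a * (?a * ?c) + ?a * ?a * D ?c + ?a * ?a * D ?c + (?a * ?c) * D ?a"
  proof -
    have h1: "?a * D ?a = D ?a * ?a" by (rule Gcentral)
    have h2: "D ?c * ?a = ?a * D ?c" by (rule Gcentral[symmetric])
    have "?a * (D ?a * ?c + ?a * D ?c + D ?c * ?a + ?c * D ?a) = ?a * (D ?a * ?c) + ?a * (?a * D ?c) + ?a * (D ?c * ?a) + ?a * (?c * D ?a)"
      by (simp only: distrib_left)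
    also have "\<dots> = D ?a * (?a * ?c) + ?a * ?a * D ?c + ?a * ?a * D ?c + (?a * ?c) * D ?a"
    proof -
      have t1: "?a * (D ?a * ?c) = D ?a * (?a * ?c)" by (metis h1 mult.assoc)
      have t2: "?a * (?a * D ?c) = ?a * ?a * D ?c" by (metis mult.assoc)
      have t3: "?a * (D ?c * ?a) = ?a * ?a * D ?c" by (metis h2 mult.assoc)
      have t4: "?a * (?c * D ?a) = (?a * ?c) * D ?a" by (metis mult.assoc)
      show ?thesis by (simp only: t1 t2 t3 t4)
    qed
    finally show ?thesis .
  qed
  moreover have jj: "D ?a * ?c + ?a * D ?c + D ?c * ?a + ?c * D ?a = 0" using j by (rule sym)
  ultimately have s: "D ?a * (?a * ?c) + ?a * ?a * D ?c + ?a * ?a * D ?c + (?a * ?c) * D ?a = 0"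
    by (simp only: mult_zero_right)
  have ac0: "?a * ?c = 0" by (rule ac)
  from s have "?a * ?a * D ?c + ?a * ?a * D ?c = 0" by (simp only: ac0 mult_zero_right mult_zero_left add_0_left add_0_right)
  then have aaD: "?a * ?a * D ?c = 0" by (rule tf)
  have "?a * ?a * (?a + ?a) = ?a * ?a * D ?c - ?a * (?a * (D x * y - y * D x)) - ?a * (?a * (x * D y - D y * x))"
    unfolding two by (simp add: algebra_simps)
  also have "\<dots> = 0" using aaD ac by simp
  finally have "?a*?a*?a + ?a*?a*?a = 0" by (simp add: algebra_simps)
  then have a3: "?a*?a*?a = 0" by (rule tf)
  have aa: "?a * ?a = 0"
  proof (rule sp)
    fix r
    have s1: "?a*?a*r*(?a*?a) = ?a*?a*(r*?a)*?a" by (simp only: mult.assoc)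
    have s2: "r * ?a = ?a * r" by (rule Gcentral[symmetric])
    have s3: "?a*?a*(?a*r)*?a = ?a*?a*?a*r*?a" by (simp only: mult.assoc)
    show "?a * ?a * r * (?a * ?a) = 0" by (simp only: s1 s2 s3 a3 mult_zero_left)
  qed
  show "?a = 0"
  proof (rule sp)
    fix r
    have s1: "?a*r*?a = ?a*(r*?a)" by (simp only: mult.assoc)
    have s2: "r * ?a = ?a * r" by (rule Gcentral[symmetric])
    have s3: "?a*(?a*r) = ?a*?a*r" by (simp only: mult.assoc)
    show "?a * r * ?a = 0" by (simp only: s1 s2 s3 aa mult_zero_left)
  qed
qed

lemma deriv: "D (x*y) = D x * y + x * D y"
  using G0[of x y] unfolding G_def by (simp add: diff_diff_eq)

end



lemma scaleC_zero_right[simp]: "c *\<^sub>C (0::'a::complex_banach_algebra_1) = 0"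
  using scaleC_add_right[of c 0 0] by simp

lemma scaleC_minus_right: "c *\<^sub>C (- x) = - (c *\<^sub>C (x::'a::complex_banach_algebra_1))"
proof -
  have "c *\<^sub>C x + c *\<^sub>C (-x) = 0" using scaleC_add_right[of c x "-x"] by simp
  then show ?thesis by (rule minus_unique[symmetric])
qed

lemma scaleC_diff_right: "c *\<^sub>C (x - y) = c *\<^sub>C x - c *\<^sub>C (y::'a::complex_banach_algebra_1)"
  using scaleC_add_right[of c x "-y"] by (simp add: scaleC_minus_right)

lemma scaleC_real': "(of_real r :: complex) *\<^sub>C x = r *\<^sub>R (x::'a::complex_banach_algebra_1)"
  by (rule scaleC_of_real)

lemma scaleC_numeral: "(numeral n :: complex) *\<^sub>C x = numeral n *\<^sub>R (x::'a::complex_banach_algebra_1)"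
  using scaleC_of_real[of "numeral n" x] by simp

lemma scaleC_pow2: "((2::complex) ^ k) *\<^sub>C x = (2 ^ k) *\<^sub>R (x::'a::complex_banach_algebra_1)"
  using scaleC_of_real[of "2 ^ k" x] by simp

lemma scaleC_scaleR: "c *\<^sub>C (r *\<^sub>R x) = r *\<^sub>R (c *\<^sub>C (x::'a::complex_banach_algebra_1))"
proof -
  have "c *\<^sub>C (r *\<^sub>R x) = c *\<^sub>C (of_real r *\<^sub>C x)" by (simp add: scaleC_of_real)
  also have "\<dots> = (of_real r * c) *\<^sub>C x" by (simp add: scaleC_scaleC mult.commute)
  also have "\<dots> = r *\<^sub>R (c *\<^sub>C x)" by (simp add: scaleC_scaleC[symmetric] scaleC_of_real)
  finally show ?thesis .
qed

lemma tendsto_scaleC: "(X :: nat \<Rightarrow> 'a::complex_banach_algebra_1) \<longlonglongrightarrow> l \<Longrightarrow> (\<lambda>k. c *\<^sub>C X k) \<longlonglongrightarrow> c *\<^sub>C l"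
proof -
  assume "X \<longlonglongrightarrow> l"
  then have "(\<lambda>k. norm (X k - l)) \<longlonglongrightarrow> 0" by (rule tendsto_norm_zero[OF LIM_zero])
  then have "(\<lambda>k. cmod c * norm (X k - l)) \<longlonglongrightarrow> 0" by (simp add: tendsto_mult_right_zero)
  then have "(\<lambda>k. norm (c *\<^sub>C X k - c *\<^sub>C l)) \<longlonglongrightarrow> 0"
    by (simp add: scaleC_diff_right[symmetric] norm_scaleC)
  then show ?thesis by (rule LIM_zero_cancel[OF tendsto_norm_zero_cancel])
qed


lemma scaleC_ofreal_mult: "(complex_of_real r * c) *\<^sub>C x = r *\<^sub>R (c *\<^sub>C (x::'a::complex_banach_algebra_1))"
  by (metis scaleC_scaleC scaleC_of_real)


definition Tb :: "('a::real_vector \<Rightarrow> 'a \<Rightarrow> real) \<Rightarrow> 'a \<Rightarrow> 'a \<Rightarrow> real" where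
  "Tb \<phi> a b = \<phi> a b + \<phi> (a+b) (-b) + \<phi> (a+b) (-a)"

definition Bd :: "('a::real_vector \<Rightarrow> 'a \<Rightarrow> real) \<Rightarrow> 'a \<Rightarrow> real" where
  "Bd \<phi> z = (Tb \<phi> ((1/3) *\<^sub>R z) ((1/3) *\<^sub>R z) + Tb \<phi> ((1/6) *\<^sub>R z) ((1/6) *\<^sub>R z)
              + Tb \<phi> ((-1/6) *\<^sub>R z) ((-1/6) *\<^sub>R z)) / 2"

lemma half_half: "(1/2) *\<^sub>R v + (1/2) *\<^sub>R v = (v::'a::real_vector)"
  by (simp add: scaleR_add_left[symmetric])
lemma half_half': "(1/2) *\<^sub>R v + ((1/2) *\<^sub>R v + w) = v + (w::'a::real_vector)"
  by (simp add: add.assoc[symmetric] half_half)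
lemma two_scaleR: "2 *\<^sub>R v = v + (v::'a::real_vector)"
  by (simp add: scaleR_2)

lemma line_identity:
  fixes F :: "real \<Rightarrow> 'a::real_vector"
  assumes F0: "F 0 = 0"
  defines "Qr \<equiv> \<lambda>r s. F (2*r+s) + F (r+2 * s) - (F (3*r) + F (3 * s))"
  defines "Tr \<equiv> \<lambda>r s. Qr r s - Qr (r+s) (-s) - Qr (r+s) (-r)"
  shows "F 2 - 2 *\<^sub>R F 1 = (1/2) *\<^sub>R Tr (1/3) (1/3) - (1/2) *\<^sub>R (Tr (1/6) (1/6) + Tr (-1/6) (-1/6))"
  unfolding Tr_def Qr_def using F0 by (simp add: algebra_simps half_half half_half' two_scaleR)

lemma step_bound:
  fixes f :: "'a::real_normed_vector \<Rightarrow> 'a"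
  assumes f0: "f 0 = 0"
    and Qb: "\<And>x y. norm (f (2 *\<^sub>R x + y) + f (x + 2 *\<^sub>R y) - (f (3 *\<^sub>R x) + f (3 *\<^sub>R y))) \<le> \<phi> x y"
  shows "norm (f (2 *\<^sub>R z) - 2 *\<^sub>R f z) \<le> Bd \<phi> z"
proof -
  define F where "F r = f (r *\<^sub>R z)" for r
  define Qr where "Qr = (\<lambda>r s. F (2*r+s) + F (r+2 * s) - (F (3*r) + F (3 * s)))"
  define Tr where "Tr = (\<lambda>r s. Qr r s - Qr (r+s) (-s) - Qr (r+s) (-r))"
  have F0: "F 0 = 0" by (simp add: F_def f0)
  have id: "F 2 - 2 *\<^sub>R F 1 = (1/2) *\<^sub>R Tr (1/3) (1/3) - (1/2) *\<^sub>R (Tr (1/6) (1/6) + Tr (-1/6) (-1/6))"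
    unfolding Tr_def Qr_def by (rule line_identity[of F, OF F0])
  have Qn: "norm (Qr r s) \<le> \<phi> (r *\<^sub>R z) (s *\<^sub>R z)" for r s
  proof -
    have "Qr r s = f (2 *\<^sub>R (r *\<^sub>R z) + s *\<^sub>R z) + f (r *\<^sub>R z + 2 *\<^sub>R (s *\<^sub>R z)) - (f (3 *\<^sub>R (r *\<^sub>R z)) + f (3 *\<^sub>R (s *\<^sub>R z)))"
      unfolding Qr_def F_def by (simp add: scaleR_add_left)
    then show ?thesis using Qb[of "r *\<^sub>R z" "s *\<^sub>R z"] by (simp only:)
  qed
  have Tn: "norm (Tr r s) \<le> Tb \<phi> (r *\<^sub>R z) (s *\<^sub>R z)" for r s
  proof -
    have "norm (Tr r s) \<le> norm (Qr r s) + norm (Qr (r+s) (-s)) + norm (Qr (r+s) (-r))"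
      unfolding Tr_def by (metis (no_types, lifting) add_mono norm_triangle_ineq4 order_trans order_refl)
    also have "\<dots> \<le> \<phi> (r *\<^sub>R z) (s *\<^sub>R z) + \<phi> ((r+s) *\<^sub>R z) ((-s) *\<^sub>R z) + \<phi> ((r+s) *\<^sub>R z) ((-r) *\<^sub>R z)"
      by (intro add_mono Qn)
    also have "\<dots> = Tb \<phi> (r *\<^sub>R z) (s *\<^sub>R z)"
      unfolding Tb_def by (simp add: scaleR_add_left)
    finally show ?thesis .
  qed
  have "f (2 *\<^sub>R z) - 2 *\<^sub>R f z = F 2 - 2 *\<^sub>R F 1" by (simp add: F_def)
  also have "\<dots> = (1/2) *\<^sub>R Tr (1/3) (1/3) - (1/2) *\<^sub>R (Tr (1/6) (1/6) + Tr (-1/6) (-1/6))" by (rule id)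
  finally have eq: "f (2 *\<^sub>R z) - 2 *\<^sub>R f z = (1/2) *\<^sub>R Tr (1/3) (1/3) - (1/2) *\<^sub>R (Tr (1/6) (1/6) + Tr (-1/6) (-1/6))" .
  have "norm (f (2 *\<^sub>R z) - 2 *\<^sub>R f z) \<le> norm ((1/2) *\<^sub>R Tr (1/3) (1/3)) + norm ((1/2) *\<^sub>R (Tr (1/6) (1/6) + Tr (-1/6) (-1/6)))"
    unfolding eq by (rule norm_triangle_ineq4)
  also have "\<dots> = (1/2) * norm (Tr (1/3) (1/3)) + (1/2) * norm (Tr (1/6) (1/6) + Tr (-1/6) (-1/6))" by simp
  also have "\<dots> \<le> (1/2) * norm (Tr (1/3) (1/3)) + (1/2) * (norm (Tr (1/6) (1/6)) + norm (Tr (-1/6) (-1/6)))"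
    by (intro add_mono mult_left_mono norm_triangle_ineq) auto
  also have "\<dots> \<le> (1/2) * Tb \<phi> ((1/3) *\<^sub>R z) ((1/3) *\<^sub>R z) + (1/2) * (Tb \<phi> ((1/6) *\<^sub>R z) ((1/6) *\<^sub>R z) + Tb \<phi> ((-1/6) *\<^sub>R z) ((-1/6) *\<^sub>R z))"
    by (intro add_mono mult_left_mono Tn) auto
  also have "\<dots> = Bd \<phi> z" unfolding Bd_def by simp
  finally show ?thesis .
qed


lemma Tb_scale:
  assumes phs: "\<And>x y. \<phi> (2 *\<^sub>R x) (2 *\<^sub>R y) \<le> 2*L*\<phi> x y"
  shows "Tb \<phi> (2 *\<^sub>R a) (2 *\<^sub>R b) \<le> 2*L*Tb \<phi> a b"
proof -
  have "Tb \<phi> (2 *\<^sub>R a) (2 *\<^sub>R b) = \<phi> (2 *\<^sub>R a) (2 *\<^sub>R b) + \<phi> (2 *\<^sub>R (a+b)) (2 *\<^sub>R (-b)) + \<phi> (2 *\<^sub>R (a+b)) (2 *\<^sub>R (-a))"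
    unfolding Tb_def by (simp add: scaleR_add_right)
  also have "\<dots> \<le> 2*L*\<phi> a b + 2*L*\<phi> (a+b) (-b) + 2*L*\<phi> (a+b) (-a)"
    by (intro add_mono phs)
  also have "\<dots> = 2*L*Tb \<phi> a b" unfolding Tb_def by (simp add: algebra_simps)
  finally show ?thesis .
qed

lemma Bd_scale:
  assumes phs: "\<And>x y. \<phi> (2 *\<^sub>R x) (2 *\<^sub>R y) \<le> 2*L*\<phi> x y"
  shows "Bd \<phi> (2 *\<^sub>R z) \<le> 2*L*Bd \<phi> z"
proof -
  have "Bd \<phi> (2 *\<^sub>R z) = (Tb \<phi> (2 *\<^sub>R ((1/3) *\<^sub>R z)) (2 *\<^sub>R ((1/3) *\<^sub>R z)) + Tb \<phi> (2 *\<^sub>R ((1/6) *\<^sub>R z)) (2 *\<^sub>R ((1/6) *\<^sub>R z))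
              + Tb \<phi> (2 *\<^sub>R ((-1/6) *\<^sub>R z)) (2 *\<^sub>R ((-1/6) *\<^sub>R z))) / 2"
    unfolding Bd_def by simp
  also have "\<dots> \<le> (2*L*Tb \<phi> ((1/3) *\<^sub>R z) ((1/3) *\<^sub>R z) + 2*L*Tb \<phi> ((1/6) *\<^sub>R z) ((1/6) *\<^sub>R z)
              + 2*L*Tb \<phi> ((-1/6) *\<^sub>R z) ((-1/6) *\<^sub>R z)) / 2"
    by (intro divide_right_mono add_mono Tb_scale[of \<phi> L, OF phs]) auto
  also have "\<dots> = 2*L*Bd \<phi> z" unfolding Bd_def by (simp add: algebra_simps)
  finally show ?thesis .
qed

lemma iter_scale1:
  fixes g :: "'a::real_vector \<Rightarrow> real"
  assumes "\<And>z. g (2 *\<^sub>R z) \<le> c * g z" and "c \<ge> 0"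
  shows "g ((2^k) *\<^sub>R z) \<le> c^k * g z"
proof (induction k)
  case 0 then show ?case by simp
next
  case (Suc k)
  have "g ((2^Suc k) *\<^sub>R z) = g (2 *\<^sub>R ((2^k) *\<^sub>R z))" by simp
  also have "\<dots> \<le> c * g ((2^k) *\<^sub>R z)" by (rule assms(1))
  also have "\<dots> \<le> c * (c^k * g z)" by (intro mult_left_mono Suc assms(2))
  finally show ?case by simp
qed

lemma iter_scale2:
  fixes g :: "'a::real_vector \<Rightarrow> 'a \<Rightarrow> real"
  assumes "\<And>x y. g (2 *\<^sub>R x) (2 *\<^sub>R y) \<le> c * g x y" and "c \<ge> 0"
  shows "g ((2^k) *\<^sub>R x) ((2^k) *\<^sub>R y) \<le> c^k * g x y"
proof (induction k)
  case 0 then show ?case by simp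
next
  case (Suc k)
  have "g ((2^Suc k) *\<^sub>R x) ((2^Suc k) *\<^sub>R y) = g (2 *\<^sub>R ((2^k) *\<^sub>R x)) (2 *\<^sub>R ((2^k) *\<^sub>R y))" by simp
  also have "\<dots> \<le> c * g ((2^k) *\<^sub>R x) ((2^k) *\<^sub>R y)" by (rule assms(1))
  also have "\<dots> \<le> c * (c^k * g x y)" by (intro mult_left_mono Suc assms(2))
  finally show ?case by simp
qed

lemma hyers_conv:
  fixes f :: "'a::banach \<Rightarrow> 'a"
  assumes f0: "f 0 = 0"
    and Qb: "\<And>x y. norm (f (2 *\<^sub>R x + y) + f (x + 2 *\<^sub>R y) - (f (3 *\<^sub>R x) + f (3 *\<^sub>R y))) \<le> \<phi> x y"
    and phs: "\<And>x y. \<phi> (2 *\<^sub>R x) (2 *\<^sub>R y) \<le> 2*L*\<phi> x y"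
    and L0: "0 \<le> L" and L1: "L < 1"
  shows "convergent (\<lambda>k. (1/2^k) *\<^sub>R f ((2^k) *\<^sub>R z))"
proof -
  define b where "b k = (1/2^k) *\<^sub>R f ((2^k) *\<^sub>R z)" for k :: nat
  define d where "d k = b (Suc k) - b k" for k
  have dn: "norm (d k) \<le> (Bd \<phi> z / 2) * L^k" for k
  proof -
    let ?w = "(2^k) *\<^sub>R z"
    have "d k = (1/2^(Suc k)) *\<^sub>R (f (2 *\<^sub>R ?w) - 2 *\<^sub>R f ?w)"
      unfolding d_def b_def by (simp add: scaleR_diff_right)
    then have "norm (d k) = (1/2^(Suc k)) * norm (f (2 *\<^sub>R ?w) - 2 *\<^sub>R f ?w)" by simp
    also have "\<dots> \<le> (1/2^(Suc k)) * Bd \<phi> ?w"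
      by (intro mult_left_mono step_bound[OF f0 Qb]) simp
    also have "\<dots> \<le> (1/2^(Suc k)) * ((2*L)^k * Bd \<phi> z)"
      by (intro mult_left_mono iter_scale1[of "Bd \<phi>" "2*L", OF Bd_scale[of \<phi> L, OF phs]]) (use L0 in auto)
    also have "\<dots> = (Bd \<phi> z / 2) * L^k" by (simp add: power_mult_distrib field_simps)
    finally show ?thesis .
  qed
  have "summable (\<lambda>k. (Bd \<phi> z / 2) * L^k)"
    by (intro summable_mult summable_geometric) (use L0 L1 in auto)
  then have sd: "summable d" by (rule summable_comparison_test'[where N=0]) (rule dn)
  have beq: "(\<lambda>n. b 0 + (\<Sum>i<n. d i)) = b"
    by (rule ext) (simp add: d_def sum_lessThan_telescope)
  have "(\<lambda>n. b 0 + (\<Sum>i<n. d i)) \<longlonglongrightarrow> b 0 + suminf d"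
    by (intro tendsto_add tendsto_const summable_LIMSEQ sd)
  then have "b \<longlonglongrightarrow> b 0 + suminf d" by (simp only: beq)
  then show ?thesis unfolding b_def[abs_def] convergent_def by blast
qed


locale hyp =
  fixes f :: "'a::complex_banach_algebra_1 \<Rightarrow> 'a"
    and \<phi> \<psi> :: "'a \<Rightarrow> 'a \<Rightarrow> real"
    and n0 :: nat and L :: real
  assumes n0: "n0 > 0"
    and semi: "semiprime TYPE('a)"
    and phi0: "\<And>x y. \<phi> x y \<ge> 0" and psi0: "\<And>x y. \<psi> x y \<ge> 0"
    and f0: "f 0 = 0"
    and psiB: "\<And>x y. norm (f (x * y * x) - f x * y * x - x * f y * x - x * y * f x) \<le> \<psi> x y"
    and muB: "\<And>x y \<mu>. \<mu> \<in> arcT n0 \<Longrightarrow>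
           norm (f ((2 * \<mu>) *\<^sub>C x + \<mu> *\<^sub>C y) + f (\<mu> *\<^sub>C x + (2 * \<mu>) *\<^sub>C y)
                 - \<mu> *\<^sub>C (f (3 *\<^sub>C x) + f (3 *\<^sub>C y))) \<le> \<phi> x y"
    and L0: "0 < L" and L1: "L < 1"
    and phis: "\<And>x y. \<phi> (2 *\<^sub>C x) (2 *\<^sub>C y) / 2 \<le> L * \<phi> x y"
    and lim8: "\<And>x y. (\<lambda>k. \<psi> ((2 ^ k) *\<^sub>C x) ((2 ^ k) *\<^sub>C y) / 8 ^ k) \<longlonglongrightarrow> 0"
    and lim4: "\<And>x y. (\<lambda>k. \<psi> ((2 ^ k) *\<^sub>C x) y / 4 ^ k) \<longlonglongrightarrow> 0"
begin

lemma one_arc: "1 \<in> arcT n0"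
  unfolding arcT_def using n0 by (auto intro!: exI[of _ 0])

lemma Qb: "norm (f (2 *\<^sub>R x + y) + f (x + 2 *\<^sub>R y) - (f (3 *\<^sub>R x) + f (3 *\<^sub>R y))) \<le> \<phi> x y"
  using muB[OF one_arc, of x y] by (simp add: scaleC_one scaleC_numeral)

lemma phs: "\<phi> (2 *\<^sub>R x) (2 *\<^sub>R y) \<le> 2*L*\<phi> x y"
  using phis[of x y] by (simp add: scaleC_numeral)

lemma phi_iter: "\<phi> ((2^k) *\<^sub>R x) ((2^k) *\<^sub>R y) \<le> (2*L)^k * \<phi> x y"
  by (rule iter_scale2[of \<phi> "2*L"]) (use phs L0 in auto)

definition b :: "nat \<Rightarrow> 'a \<Rightarrow> 'a" where "b k x = (1/2^k) *\<^sub>R f ((2^k) *\<^sub>R x)"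
definition D :: "'a \<Rightarrow> 'a" where "D x = lim (\<lambda>k. b k x)"

lemma bD: "(\<lambda>k. b k x) \<longlonglongrightarrow> D x"
proof -
  have "convergent (\<lambda>k. b k x)" unfolding b_def
    by (rule hyers_conv[OF f0 Qb phs]) (use L0 L1 in auto)
  then show ?thesis unfolding D_def by (simp add: convergent_LIMSEQ_iff)
qed

lemma null_bound:
  assumes "\<And>k. norm (X k) \<le> L^k * c"
  shows "X \<longlonglongrightarrow> 0"
proof (rule Lim_null_comparison)
  show "\<forall>\<^sub>F k in sequentially. norm (X k) \<le> L^k * c" using assms by simp
  show "(\<lambda>k. L^k * c) \<longlonglongrightarrow> 0" by (intro tendsto_mult_left_zero LIMSEQ_power_zero) (use L0 L1 in auto)
qed

lemma mu_limit:
  assumes mu: "\<mu> \<in> arcT n0"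
  shows "D ((2 * \<mu>) *\<^sub>C x + \<mu> *\<^sub>C y) + D (\<mu> *\<^sub>C x + (2 * \<mu>) *\<^sub>C y) - \<mu> *\<^sub>C (D (3 *\<^sub>C x) + D (3 *\<^sub>C y)) = 0"
proof -
  define E where "E k = b k ((2 * \<mu>) *\<^sub>C x + \<mu> *\<^sub>C y) + b k (\<mu> *\<^sub>C x + (2 * \<mu>) *\<^sub>C y) - \<mu> *\<^sub>C (b k (3 *\<^sub>C x) + b k (3 *\<^sub>C y))" for k
  have lim1: "E \<longlonglongrightarrow> D ((2 * \<mu>) *\<^sub>C x + \<mu> *\<^sub>C y) + D (\<mu> *\<^sub>C x + (2 * \<mu>) *\<^sub>C y) - \<mu> *\<^sub>C (D (3 *\<^sub>C x) + D (3 *\<^sub>C y))"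
    unfolding E_def by (intro tendsto_diff tendsto_add tendsto_scaleC bD)
  have "norm (E k) \<le> L^k * \<phi> x y" for k
  proof -
    let ?x = "(2^k) *\<^sub>R x" and ?y = "(2^k) *\<^sub>R y"
    have "E k = (1/2^k) *\<^sub>R (f ((2 * \<mu>) *\<^sub>C ?x + \<mu> *\<^sub>C ?y) + f (\<mu> *\<^sub>C ?x + (2 * \<mu>) *\<^sub>C ?y)
                 - \<mu> *\<^sub>C (f (3 *\<^sub>C ?x) + f (3 *\<^sub>C ?y)))"
      unfolding E_def b_def by (simp add: scaleC_scaleR scaleR_add_right scaleR_diff_right scaleC_add_right)
    then have "norm (E k) = (1/2^k) * norm (f ((2 * \<mu>) *\<^sub>C ?x + \<mu> *\<^sub>C ?y) + f (\<mu> *\<^sub>C ?x + (2 * \<mu>) *\<^sub>C ?y)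
                 - \<mu> *\<^sub>C (f (3 *\<^sub>C ?x) + f (3 *\<^sub>C ?y)))" by simp
    also have "\<dots> \<le> (1/2^k) * \<phi> ?x ?y" by (intro mult_left_mono muB mu) simp
    also have "\<dots> \<le> (1/2^k) * ((2*L)^k * \<phi> x y)" by (intro mult_left_mono phi_iter) simp
    also have "\<dots> = L^k * \<phi> x y" by (simp add: power_mult_distrib)
    finally show ?thesis .
  qed
  then have "E \<longlonglongrightarrow> 0" by (rule null_bound)
  with lim1 show ?thesis using LIMSEQ_unique by blast
qed


lemma D0: "D 0 = 0"
proof -
  have "(\<lambda>k. b k 0) \<longlonglongrightarrow> 0" by (simp add: b_def f0)
  with bD[of 0] show ?thesis using LIMSEQ_unique by blast
qed

lemma D2: "D (2 *\<^sub>R x) = 2 *\<^sub>R D x"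
proof -
  have "(\<lambda>k. b k (2 *\<^sub>R x)) = (\<lambda>k. 2 *\<^sub>R b (Suc k) x)"
    by (rule ext) (simp add: b_def mult.commute)
  moreover have "(\<lambda>k. 2 *\<^sub>R b (Suc k) x) \<longlonglongrightarrow> 2 *\<^sub>R D x"
    by (intro tendsto_scaleR tendsto_const LIMSEQ_Suc bD)
  ultimately have "(\<lambda>k. b k (2 *\<^sub>R x)) \<longlonglongrightarrow> 2 *\<^sub>R D x" by simp
  with bD[of "2 *\<^sub>R x"] show ?thesis using LIMSEQ_unique by blast
qed

lemma QD: "D (2 *\<^sub>R x + y) + D (x + 2 *\<^sub>R y) = D (3 *\<^sub>R x) + D (3 *\<^sub>R y)"
  using mu_limit[OF one_arc, of x y] by (simp add: scaleC_one scaleC_numeral)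

lemma D3: "D (3 *\<^sub>R x) = 3 *\<^sub>R D x"
proof -
  have "D (2 *\<^sub>R x) + D x = D (3 *\<^sub>R x)" using QD[of x 0] by (simp add: D0)
  moreover have "3 *\<^sub>R D x = 2 *\<^sub>R D x + D x"
  proof -
    have "3 *\<^sub>R D x = (2+1) *\<^sub>R D x" by simp
    also have "\<dots> = 2 *\<^sub>R D x + 1 *\<^sub>R D x" by (rule scaleR_add_left)
    finally show ?thesis by simp
  qed
  ultimately show ?thesis by (simp add: D2)
qed

lemma Dodd: "D (- x) = - D x"
proof -
  have e1: "2 *\<^sub>R x + -x = x" by (simp add: scaleR_2)
  have e2: "x + 2 *\<^sub>R (-x) = -x" by (simp add: scaleR_2)
  have "D x + D (-x) = D (3 *\<^sub>R x) + D (3 *\<^sub>R (-x))" using QD[of x "-x"] unfolding e1 e2 .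
  also have "\<dots> = 3 *\<^sub>R (D x + D (-x))" unfolding D3 by (simp only: scaleR_add_right)
  also have "\<dots> = 2 *\<^sub>R (D x + D (-x)) + (D x + D (-x))"
  proof -
    have "3 *\<^sub>R (D x + D (-x)) = (2+1) *\<^sub>R (D x + D (-x))" by simp
    also have "\<dots> = 2 *\<^sub>R (D x + D (-x)) + 1 *\<^sub>R (D x + D (-x))" by (rule scaleR_add_left)
    finally show ?thesis by simp
  qed
  finally have "2 *\<^sub>R (D x + D (-x)) = 0" by simp
  then have "D x + D (-x) = 0" by simp
  then have "- D x = D (-x)" by (rule minus_unique)
  then show ?thesis by simp
qed

lemma Dadd: "D (x + y) = D x + D y"
proof -
  have P: "D (2 *\<^sub>R u + v) + D (u + 2 *\<^sub>R v) = 3 *\<^sub>R D u + 3 *\<^sub>R D v" for u v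
    using QD[of u v] by (simp add: D3)
  have B: "D (2 *\<^sub>R x + y) + D (x + 2 *\<^sub>R y) = 3 *\<^sub>R D x + 3 *\<^sub>R D y" by (rule P)
  have A: "D (2 *\<^sub>R x + y) + D (x - y) = 3 *\<^sub>R D (x+y) - 3 *\<^sub>R D y"
  proof -
    have e1: "2 *\<^sub>R (x + y) + - y = 2 *\<^sub>R x + y" by (simp add: algebra_simps scaleR_2)
    have e2: "x + y + 2 *\<^sub>R (- y) = x - y" by (simp add: algebra_simps scaleR_2)
    show ?thesis using P[of "x+y" "-y"] unfolding e1 e2 by (simp add: Dodd)
  qed
  have A': "D (x + 2 *\<^sub>R y) - D (x - y) = 3 *\<^sub>R D (x+y) - 3 *\<^sub>R D x"
  proof -
    have e1: "2 *\<^sub>R (x + y) + - x = x + 2 *\<^sub>R y" by (simp add: algebra_simps scaleR_2)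
    have e2: "x + y + 2 *\<^sub>R (- x) = - (x - y)" by (simp add: algebra_simps scaleR_2)
    show ?thesis using P[of "x+y" "-x"] unfolding e1 e2 Dodd by simp
  qed
  define a where "a = D (2 *\<^sub>R x + y)"
  define c where "c = D (x + 2 *\<^sub>R y)"
  define e where "e = D (x - y)"
  define p where "p = 3 *\<^sub>R D x"
  define q where "q = 3 *\<^sub>R D y"
  define t where "t = 3 *\<^sub>R D (x + y)"
  have A1: "a + e = t - q" using A unfolding a_def e_def t_def q_def .
  have A2: "c - e = t - p" using A' unfolding c_def e_def t_def p_def .
  have B1: "a + c = p + q" using B unfolding a_def c_def p_def q_def .
  have "(t - q) + (t - p) = (a + e) + (c - e)" using A1 A2 by simp
  also have "\<dots> = a + c" by simp
  also have "\<dots> = p + q" by (rule B1)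
  finally have E: "(t - q) + (t - p) = p + q" .
  have "t + t - ((p + q) + (p + q)) = ((t - q) + (t - p)) - (p + q)" by (simp add: algebra_simps)
  also have "\<dots> = 0" using E by simp
  finally have "t + t = (p + q) + (p + q)" by simp
  then have "(3 + 3) *\<^sub>R D (x + y) = (3 + 3) *\<^sub>R (D x + D y)"
    unfolding t_def p_def q_def scaleR_add_left scaleR_add_right by (simp add: algebra_simps)
  then show ?thesis by simp
qed


lemma b_sub: "(\<lambda>k. b (m*k) v) \<longlonglongrightarrow> D v" if "m > 0"
proof -
  have "strict_mono (\<lambda>k::nat. m*k)" using that by (simp add: strict_mono_def)
  from LIMSEQ_subseq_LIMSEQ[OF bD this] show ?thesis by (simp add: o_def)
qed

lemma tri8: "D (x*y*x) = D x * y * x + x * D y * x + x * y * D x"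
proof -
  define E where "E k = b (3*k) (x*y*x) - b k x * y * x - x * b k y * x - x * y * b k x" for k
  have lim1: "E \<longlonglongrightarrow> D (x*y*x) - D x * y * x - x * D y * x - x * y * D x"
    unfolding E_def by (intro tendsto_diff tendsto_mult tendsto_const bD b_sub) simp
  have Eeq: "E k = (1/8^k) *\<^sub>R (f (((2^k) *\<^sub>R x) * ((2^k) *\<^sub>R y) * ((2^k) *\<^sub>R x))
      - f ((2^k) *\<^sub>R x) * ((2^k) *\<^sub>R y) * ((2^k) *\<^sub>R x) - ((2^k) *\<^sub>R x) * f ((2^k) *\<^sub>R y) * ((2^k) *\<^sub>R x)
      - ((2^k) *\<^sub>R x) * ((2^k) *\<^sub>R y) * f ((2^k) *\<^sub>R x))" for k
  proof -
    define r :: real where "r = 2^k"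
    have r0: "r > 0" unfolding r_def by simp
    have h1: "(2::real)^(3*k) = r*r*r" unfolding r_def by (simp add: power_mult power_mult_distrib[symmetric])
    have h2: "(8::real)^k = r*r*r" unfolding r_def by (simp add: power_mult_distrib[symmetric])
    have c1: "1/(r*r*r) * (r*r*r) = 1" using r0 by simp
    have c2: "1/(r*r*r) * (r*r) = 1/r" using r0 by (simp add: field_simps)
    show ?thesis unfolding E_def b_def h1 h2 r_def[symmetric]
      by (simp add: scaleR_diff_right c1 c2 mult.assoc)
  qed
  have "norm (E k) \<le> \<psi> ((2 ^ k) *\<^sub>C x) ((2 ^ k) *\<^sub>C y) / 8 ^ k" for k
  proof -
    let ?X = "(2^k) *\<^sub>R x" and ?Y = "(2^k) *\<^sub>R y"
    have "norm (E k) = (1/8^k) * norm (f (?X * ?Y * ?X) - f ?X * ?Y * ?X - ?X * f ?Y * ?X - ?X * ?Y * f ?X)"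
      unfolding Eeq by (simp only: norm_scaleR) simp
    also have "\<dots> \<le> (1/8^k) * \<psi> ?X ?Y" by (intro mult_left_mono psiB) simp
    finally show ?thesis by (simp add: scaleC_pow2)
  qed
  then have "E \<longlonglongrightarrow> 0" by (intro Lim_null_comparison[OF _ lim8[of x y]]) simp
  with lim1 have "D (x*y*x) - D x * y * x - x * D y * x - x * y * D x = 0" by (rule LIMSEQ_unique)
  then show ?thesis by (simp add: diff_diff_eq)
qed


lemma tri4: "D (x*y*x) = D x * y * x + x * f y * x + x * y * D x"
proof -
  define E where "E k = b (2*k) (x*y*x) - b k x * y * x - x * f y * x - x * y * b k x" for k
  have lim1: "E \<longlonglongrightarrow> D (x*y*x) - D x * y * x - x * f y * x - x * y * D x"
    unfolding E_def by (intro tendsto_diff tendsto_mult tendsto_const bD b_sub) simp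
  have Eeq: "E k = (1/4^k) *\<^sub>R (f (((2^k) *\<^sub>R x) * y * ((2^k) *\<^sub>R x))
      - f ((2^k) *\<^sub>R x) * y * ((2^k) *\<^sub>R x) - ((2^k) *\<^sub>R x) * f y * ((2^k) *\<^sub>R x)
      - ((2^k) *\<^sub>R x) * y * f ((2^k) *\<^sub>R x))" for k
  proof -
    define r :: real where "r = 2^k"
    have r0: "r > 0" unfolding r_def by simp
    have h1: "(2::real)^(2*k) = r*r" unfolding r_def by (simp add: power_mult power_mult_distrib[symmetric])
    have h2: "(4::real)^k = r*r" unfolding r_def by (simp add: power_mult_distrib[symmetric])
    have c1: "1/(r*r) * (r*r) = 1" using r0 by simp
    have c2: "1/(r*r) * r = 1/r" using r0 by (simp add: field_simps)
    show ?thesis unfolding E_def b_def h1 h2 r_def[symmetric]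
      using r0 by (simp add: scaleR_diff_right c1 c2 mult.assoc)
  qed
  have "norm (E k) \<le> \<psi> ((2 ^ k) *\<^sub>C x) y / 4 ^ k" for k
  proof -
    let ?X = "(2^k) *\<^sub>R x"
    have "norm (E k) = (1/4^k) * norm (f (?X * y * ?X) - f ?X * y * ?X - ?X * f y * ?X - ?X * y * f ?X)"
      unfolding Eeq by (simp only: norm_scaleR) simp
    also have "\<dots> \<le> (1/4^k) * \<psi> ?X y" by (intro mult_left_mono psiB) simp
    finally show ?thesis by (simp add: scaleC_pow2)
  qed
  then have "E \<longlonglongrightarrow> 0" by (intro Lim_null_comparison[OF _ lim4[of x y]]) simp
  with lim1 have "D (x*y*x) - D x * y * x - x * f y * x - x * y * D x = 0" by (rule LIMSEQ_unique)
  then show ?thesis by (simp add: diff_diff_eq)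
qed

lemma f_eq_D: "f = D"
proof
  fix y
  have "1 * D y * 1 = 1 * D y * 1 + 1 * f y * 1 - 1 * f y * 1" by simp
  have "f y = D y" using tri8[of 1 y] tri4[of 1 y] by simp
  then show "f y = D y" .
qed


lemma Dhalf: "D ((1/2) *\<^sub>R v) = (1/2) *\<^sub>R D v"
proof -
  have "D v = D ((1/2) *\<^sub>R v + (1/2) *\<^sub>R v)" by (simp add: half_half)
  also have "\<dots> = 2 *\<^sub>R D ((1/2) *\<^sub>R v)" by (simp add: Dadd scaleR_2)
  finally show ?thesis by simp
qed

lemma Dnat: "D (real m *\<^sub>R v) = real m *\<^sub>R D v"
  by (induction m) (simp_all add: D0 Dadd scaleR_add_left)

lemma Darc:
  assumes mu: "\<mu> \<in> arcT n0"
  shows "D (\<mu> *\<^sub>C z) = \<mu> *\<^sub>C D z"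
proof -
  let ?w = "(1/3) *\<^sub>R z"
  have e1: "(2 * \<mu>) *\<^sub>C ?w + \<mu> *\<^sub>C ?w = \<mu> *\<^sub>C z"
  proof -
    have "(2 * \<mu>) *\<^sub>C ?w + \<mu> *\<^sub>C ?w = (3 * \<mu>) *\<^sub>C ?w" by (simp add: scaleC_add_left[symmetric])
    also have "\<dots> = (1/3) *\<^sub>R (3 *\<^sub>C (\<mu> *\<^sub>C z))" by (simp add: scaleC_scaleR scaleC_scaleC)
    also have "\<dots> = \<mu> *\<^sub>C z" by (simp add: scaleC_numeral)
    finally show ?thesis .
  qed
  have e2: "\<mu> *\<^sub>C ?w + (2 * \<mu>) *\<^sub>C ?w = \<mu> *\<^sub>C z" using e1 by (simp add: add.commute)
  have e3: "3 *\<^sub>C ?w = z" by (simp add: scaleC_numeral)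
  have "D (\<mu> *\<^sub>C z) + D (\<mu> *\<^sub>C z) - \<mu> *\<^sub>C (D z + D z) = 0"
    using mu_limit[OF mu, of ?w ?w] unfolding e1 e2 e3 .
  then have "2 *\<^sub>R D (\<mu> *\<^sub>C z) = 2 *\<^sub>R (\<mu> *\<^sub>C D z)" by (simp add: scaleC_add_right scaleR_2)
  then show ?thesis by simp
qed

lemma Dmult_closed:
  assumes "\<And>z. D (a *\<^sub>C z) = a *\<^sub>C D z" "\<And>z. D (c *\<^sub>C z) = c *\<^sub>C D z"
  shows "D ((a * c) *\<^sub>C z) = (a * c) *\<^sub>C D z"
  using assms by (simp add: scaleC_scaleC[symmetric])

lemma Dpow:
  assumes "\<And>z. D (a *\<^sub>C z) = a *\<^sub>C D z"
  shows "D ((a ^ n) *\<^sub>C z) = (a ^ n) *\<^sub>C D z"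
proof (induction n arbitrary: z)
  case 0 then show ?case by (simp add: scaleC_one)
next
  case (Suc n) then show ?case using Dmult_closed[of a "a^n"] assms by simp
qed

lemma Dcis_nonneg:
  assumes "a \<ge> 0"
  shows "D (cis a *\<^sub>C z) = cis a *\<^sub>C D z"
proof -
  define N where "N = n0 * (nat \<lceil>a\<rceil> + 1)"
  have N0: "N > 0" unfolding N_def using n0 by simp
  have "real n0 * a \<le> real n0 * (real (nat \<lceil>a\<rceil>) + 1)"
    by (intro mult_left_mono) (use assms in \<open>auto simp: of_nat_nat\<close>, linarith)
  also have "\<dots> = real N" unfolding N_def by (simp add: algebra_simps)
  also have "\<dots> \<le> 2 * pi * real N" using N0 pi_gt3 by simp
  finally have le: "real n0 * a \<le> 2 * pi * real N" .
  have arc: "cis (a / real N) \<in> arcT n0"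
    unfolding arcT_def
  proof (intro CollectI exI conjI)
    show "cis (a / real N) = cis (a / real N)" ..
    show "0 \<le> a / real N" using assms N0 by simp
    show "a / real N \<le> 2 * pi / real n0" using le N0 n0 by (simp add: field_simps)
  qed
  have "cis a = cis (a / real N) ^ N" using N0 by (simp add: Complex.DeMoivre)
  then show ?thesis using Dpow[of "cis (a / real N)" N] Darc[OF arc] by simp
qed

lemma Dcis: "D (cis a *\<^sub>C z) = cis a *\<^sub>C D z"
proof (cases "a \<ge> 0")
  case True then show ?thesis by (rule Dcis_nonneg)
next
  case False
  then have h: "D (cis (-a) *\<^sub>C w) = cis (-a) *\<^sub>C D w" for w by (intro Dcis_nonneg) simp
  have "D z = D (cis (-a) *\<^sub>C (cis a *\<^sub>C z))" by (simp add: scaleC_scaleC cis_mult scaleC_one)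
  also have "\<dots> = cis (-a) *\<^sub>C D (cis a *\<^sub>C z)" by (rule h)
  finally have "cis a *\<^sub>C D z = cis a *\<^sub>C (cis (-a) *\<^sub>C D (cis a *\<^sub>C z))" by simp
  also have "\<dots> = D (cis a *\<^sub>C z)" by (simp add: scaleC_scaleC cis_mult scaleC_one)
  finally show ?thesis by simp
qed

lemma Dhom: "D (c *\<^sub>C z) = c *\<^sub>C D z"
proof -
  define m where "m = nat \<lceil>cmod c\<rceil> + 1"
  have m0: "m > 0" unfolding m_def by simp
  have mc: "cmod c \<le> real m" unfolding m_def by linarith
  define l where "l = c / of_nat m"
  have cl: "c = of_nat m * l" unfolding l_def using m0 by simp
  have l1: "cmod l \<le> 1" unfolding l_def using m0 mc by (simp add: norm_divide field_simps)
  obtain r a where ra: "l = rcis r a" using rcis_Ex by blast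
  have r1: "\<bar>r\<bar> \<le> 1" using l1 ra by simp
  define \<beta> where "\<beta> = arccos r"
  have cb: "cos \<beta> = r" unfolding \<beta>_def using r1 by simp
  have l2: "l = complex_of_real (1/2) * (cis (a + \<beta>) + cis (a - \<beta>))"
    unfolding ra rcis_def by (simp add: complex_eq_iff cos_add cos_diff sin_add sin_diff cb)
  have lw: "l *\<^sub>C w = (1/2) *\<^sub>R (cis (a + \<beta>) *\<^sub>C w + cis (a - \<beta>) *\<^sub>C w)" for w :: 'a
    unfolding l2 by (simp only: scaleC_ofreal_mult scaleC_add_left)
  have "D (l *\<^sub>C z) = D ((1/2) *\<^sub>R (cis (a + \<beta>) *\<^sub>C z + cis (a - \<beta>) *\<^sub>C z))"
    by (simp only: lw)
  also have "\<dots> = (1/2) *\<^sub>R (cis (a + \<beta>) *\<^sub>C D z + cis (a - \<beta>) *\<^sub>C D z)"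
    by (simp only: Dhalf Dadd Dcis)
  also have "\<dots> = l *\<^sub>C D z"
    by (simp only: lw)
  finally have Dl: "D (l *\<^sub>C z) = l *\<^sub>C D z" .
  have "c *\<^sub>C z = real m *\<^sub>R (l *\<^sub>C z)"
    unfolding cl by (simp add: scaleC_scaleC[symmetric] scaleC_of_real[symmetric])
  moreover have "c *\<^sub>C D z = real m *\<^sub>R (l *\<^sub>C D z)"
    unfolding cl by (simp add: scaleC_scaleC[symmetric] scaleC_of_real[symmetric])
  ultimately show ?thesis by (simp add: Dnat Dl)
qed


lemma result: "linear_derivation f"
proof -
  have spall: "\<forall>a::'a. (\<forall>x. a * x * a = 0) \<longrightarrow> a = 0" by (rule semi[unfolded semiprime_def])
  have sp: "a = 0" if H: "\<And>x. a * x * a = 0" for a :: 'a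
  proof -
    have "\<forall>x. a * x * a = 0" using H by (rule allI)
    moreover have "(\<forall>x. a * x * a = 0) \<longrightarrow> a = 0" using spall by (rule spec)
    ultimately show "a = 0" by (rule rev_mp)
  qed
  have tf: "\<And>x::'a. x + x = 0 \<Longrightarrow> x = 0"
  proof -
    fix x :: 'a assume "x + x = 0"
    then have "2 *\<^sub>R x = 0" by (simp add: scaleR_2)
    then show "x = 0" by simp
  qed
  interpret j: jtd D
  proof
    show "D (x + y) = D x + D y" for x y by (rule Dadd)
    show "a = 0" if "\<And>x. a * x * a = 0" for a :: 'a using that by (rule sp)
    show "x = 0" if "x + x = 0" for x :: 'a using that by (rule tf)
    show "D (x * y * x) = D x * y * x + x * D y * x + x * y * D x" for x y by (rule tri8)
  qed
  have LD: "linear_derivation D" unfolding linear_derivation_def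
    by (intro conjI allI Dadd Dhom j.deriv)
  show ?thesis by (subst f_eq_D) (rule LD)
qed

end

theorem theorem2p10:
  fixes f :: "'a::complex_banach_algebra_1 \<Rightarrow> 'a"
    and \<phi> \<psi> :: "'a \<Rightarrow> 'a \<Rightarrow> real"
    and n0 :: nat and L :: real
  assumes "n0 > 0"
    and "semiprime TYPE('a)"
    and "\<And>x y. \<phi> x y \<ge> 0" and "\<And>x y. \<psi> x y \<ge> 0"
    and "f 0 = 0"
    and "\<And>x y. norm (f (x * y * x) - f x * y * x - x * f y * x - x * y * f x) \<le> \<psi> x y"
    and "\<And>x y \<mu>. \<mu> \<in> arcT n0 \<Longrightarrow>
           norm (f ((2 * \<mu>) *\<^sub>C x + \<mu> *\<^sub>C y) + f (\<mu> *\<^sub>C x + (2 * \<mu>) *\<^sub>C y)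
                 - \<mu> *\<^sub>C (f (3 *\<^sub>C x) + f (3 *\<^sub>C y))) \<le> \<phi> x y"
    and "0 < L" and "L < 1"
    and "\<And>x y. \<phi> (2 *\<^sub>C x) (2 *\<^sub>C y) / 2 \<le> L * \<phi> x y"
    and "\<And>x y. (\<lambda>k. \<psi> ((2 ^ k) *\<^sub>C x) ((2 ^ k) *\<^sub>C y) / 8 ^ k) \<longlonglongrightarrow> 0"
    and "\<And>x y. (\<lambda>k. \<psi> ((2 ^ k) *\<^sub>C x) y / 4 ^ k) \<longlonglongrightarrow> 0"
  shows "linear_derivation f"
proof -
  have H: "hyp f \<phi> \<psi> n0 L" using assms by (rule hyp.intro)
  show ?thesis by (rule hyp.result[OF H])
qed

end
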